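(* Let $\psi_0(x,t)$ be a classical solution of $\mathrm{i}\psi_t+\tfrac12\psi_{xx}+(|\psi|^2-1)\psi=0$ on $\mathbb{R}^2$, let $\zeta\in\mathbb{C}$, and let $\mathbf{u}^{[a]}(x,t)$, $\mathbf{u}^{[b]}(x,t)$ be (not necessarily distinct) $\mathbb{C}^2$-valued simultaneous solutions of $\mathbf{u}_x=\begin{bmatrix}-\mathrm{i}\zeta&\psi_0\\-\psi_0^*&\mathrm{i}\zeta\end{bmatrix}\mathbf{u}$ and $\mathbf{u}_t=\begin{bmatrix}-\mathrm{i}\zeta^2+\frac{\mathrm{i}}2(|\psi_0|^2-1)&\zeta\psi_0+\frac{\mathrm{i}}2\psi_{0x}\\-\zeta\psi_0^*+\frac{\mathrm{i}}2\psi_{0x}^*&\mathrm{i}\zeta^2-\frac{\mathrm{i}}2(|\psi_0|^2-1)\end{bmatrix}\mathbf{u}$. Then for every $C\in\mathbb{C}$ the function $$\psi_1(x,t)=C\,u^{[a]}_1u^{[b]}_1-C^*\,\big(u^{[a]}_2u^{[b]}_2\big)^*$$ solves the linearized NLS equation $\mathrm{i}\psi_{1t}+\tfrac12\psi_{1xx}+(2|\psi_0|^2-1)\psi_1+\psi_0^2\psi_1^*=0$. In particular $\mu^{[ab]}=u^{[a]}_1u^{[b]}_1-(u^{[a]}_2u^{[b]}_2)^*$ ($C=1$) and $\nu^{[ab]}=\mathrm{i}u^{[a]}_1u^{[b]}_1+\mathrm{i}(u^{[a]}_2u^{[b]}_2)^*$ ($C=\mathrm{i}$) are solutions.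
   Context: $^*$ denotes complex conjugation; $u_j$ denotes the $j$-th component of $\mathbf{u}$. *)

theory Defs
  imports "HOL-Analysis.Analysis"
begin

text \<open>Functions on the (x,t)-plane are curried: f x t. Partial derivatives are
  taken as one-variable derivatives in x (resp. t) with the other variable fixed.\<close>

definition classical_NLS_solution ::
  "(real \<Rightarrow> real \<Rightarrow> complex) \<Rightarrow> (real \<Rightarrow> real \<Rightarrow> complex) \<Rightarrow>
   (real \<Rightarrow> real \<Rightarrow> complex) \<Rightarrow> (real \<Rightarrow> real \<Rightarrow> complex) \<Rightarrow> bool" where
  "classical_NLS_solution \<psi> \<psi>x \<psi>xx \<psi>t \<longleftrightarrow>
     continuous_on UNIV (case_prod \<psi>) \<and> continuous_on UNIV (case_prod \<psi>x) \<and>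
     continuous_on UNIV (case_prod \<psi>xx) \<and> continuous_on UNIV (case_prod \<psi>t) \<and>
     (\<forall>x t. ((\<lambda>y. \<psi> y t) has_vector_derivative \<psi>x x t) (at x)) \<and>
     (\<forall>x t. ((\<lambda>y. \<psi>x y t) has_vector_derivative \<psi>xx x t) (at x)) \<and>
     (\<forall>x t. ((\<lambda>s. \<psi> x s) has_vector_derivative \<psi>t x t) (at t)) \<and>
     (\<forall>x t. \<i> * \<psi>t x t + \<psi>xx x t / 2 + (complex_of_real ((cmod (\<psi> x t))\<^sup>2) - 1) * \<psi> x t = 0)"

definition lax_pair_solution ::
  "(real \<Rightarrow> real \<Rightarrow> complex) \<Rightarrow> (real \<Rightarrow> real \<Rightarrow> complex) \<Rightarrow> complex \<Rightarrow>
   (real \<Rightarrow> real \<Rightarrow> complex) \<Rightarrow> (real \<Rightarrow> real \<Rightarrow> complex) \<Rightarrow> bool" where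
  "lax_pair_solution \<psi> \<psi>x \<zeta> u1 u2 \<longleftrightarrow>
     (\<forall>x t. ((\<lambda>y. u1 y t) has_vector_derivative
                (- \<i> * \<zeta> * u1 x t + \<psi> x t * u2 x t)) (at x)) \<and>
     (\<forall>x t. ((\<lambda>y. u2 y t) has_vector_derivative
                (- cnj (\<psi> x t) * u1 x t + \<i> * \<zeta> * u2 x t)) (at x)) \<and>
     (\<forall>x t. ((\<lambda>s. u1 x s) has_vector_derivative
                ((- \<i> * \<zeta>\<^sup>2 + \<i> / 2 * (complex_of_real ((cmod (\<psi> x t))\<^sup>2) - 1)) * u1 x t
                 + (\<zeta> * \<psi> x t + \<i> / 2 * \<psi>x x t) * u2 x t)) (at t)) \<and>
     (\<forall>x t. ((\<lambda>s. u2 x s) has_vector_derivative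
                ((- \<zeta> * cnj (\<psi> x t) + \<i> / 2 * cnj (\<psi>x x t)) * u1 x t
                 + (\<i> * \<zeta>\<^sup>2 - \<i> / 2 * (complex_of_real ((cmod (\<psi> x t))\<^sup>2) - 1)) * u2 x t)) (at t))"

definition solves_linearized_NLS ::
  "(real \<Rightarrow> real \<Rightarrow> complex) \<Rightarrow> (real \<Rightarrow> real \<Rightarrow> complex) \<Rightarrow> bool" where
  "solves_linearized_NLS \<psi>0 \<psi>1 \<longleftrightarrow>
     (\<exists>\<psi>1x \<psi>1xx \<psi>1t.
        (\<forall>x t. ((\<lambda>y. \<psi>1 y t) has_vector_derivative \<psi>1x x t) (at x)) \<and>
        (\<forall>x t. ((\<lambda>y. \<psi>1x y t) has_vector_derivative \<psi>1xx x t) (at x)) \<and>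
        (\<forall>x t. ((\<lambda>s. \<psi>1 x s) has_vector_derivative \<psi>1t x t) (at t)) \<and>
        (\<forall>x t. \<i> * \<psi>1t x t + \<psi>1xx x t / 2 + (2 * complex_of_real ((cmod (\<psi>0 x t))\<^sup>2) - 1) * \<psi>1 x t
               + (\<psi>0 x t)\<^sup>2 * cnj (\<psi>1 x t) = 0))"

end

theory Submission
  imports Defs
begin

lemma gen:
  fixes \<psi> \<psi>x \<psi>xx \<psi>t :: "real \<Rightarrow> real \<Rightarrow> complex"
    and \<zeta> C :: complex
    and a1 a2 b1 b2 :: "real \<Rightarrow> real \<Rightarrow> complex"
  assumes N: "classical_NLS_solution \<psi> \<psi>x \<psi>xx \<psi>t"
    and A: "lax_pair_solution \<psi> \<psi>x \<zeta> a1 a2"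
    and B: "lax_pair_solution \<psi> \<psi>x \<zeta> b1 b2"
  shows "solves_linearized_NLS \<psi> (\<lambda>x t. C * a1 x t * b1 x t - cnj C * cnj (a2 x t * b2 x t))"
proof -
  have px: "\<And>x t. ((\<lambda>y. \<psi> y t) has_vector_derivative \<psi>x x t) (at x)"
    using N unfolding classical_NLS_solution_def by blast
  have a1x: "\<And>x t. ((\<lambda>y. a1 y t) has_vector_derivative
                (- \<i> * \<zeta> * a1 x t + \<psi> x t * a2 x t)) (at x)"
   and a2x: "\<And>x t. ((\<lambda>y. a2 y t) has_vector_derivative
                (- cnj (\<psi> x t) * a1 x t + \<i> * \<zeta> * a2 x t)) (at x)"
   and a1t: "\<And>x t. ((\<lambda>s. a1 x s) has_vector_derivative
                ((- \<i> * \<zeta>\<^sup>2 + \<i> / 2 * (complex_of_real ((cmod (\<psi> x t))\<^sup>2) - 1)) * a1 x t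
                 + (\<zeta> * \<psi> x t + \<i> / 2 * \<psi>x x t) * a2 x t)) (at t)"
   and a2t: "\<And>x t. ((\<lambda>s. a2 x s) has_vector_derivative
                ((- \<zeta> * cnj (\<psi> x t) + \<i> / 2 * cnj (\<psi>x x t)) * a1 x t
                 + (\<i> * \<zeta>\<^sup>2 - \<i> / 2 * (complex_of_real ((cmod (\<psi> x t))\<^sup>2) - 1)) * a2 x t)) (at t)"
    using A unfolding lax_pair_solution_def by blast+
  have b1x: "\<And>x t. ((\<lambda>y. b1 y t) has_vector_derivative
                (- \<i> * \<zeta> * b1 x t + \<psi> x t * b2 x t)) (at x)"
   and b2x: "\<And>x t. ((\<lambda>y. b2 y t) has_vector_derivative
                (- cnj (\<psi> x t) * b1 x t + \<i> * \<zeta> * b2 x t)) (at x)"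
   and b1t: "\<And>x t. ((\<lambda>s. b1 x s) has_vector_derivative
                ((- \<i> * \<zeta>\<^sup>2 + \<i> / 2 * (complex_of_real ((cmod (\<psi> x t))\<^sup>2) - 1)) * b1 x t
                 + (\<zeta> * \<psi> x t + \<i> / 2 * \<psi>x x t) * b2 x t)) (at t)"
   and b2t: "\<And>x t. ((\<lambda>s. b2 x s) has_vector_derivative
                ((- \<zeta> * cnj (\<psi> x t) + \<i> / 2 * cnj (\<psi>x x t)) * b1 x t
                 + (\<i> * \<zeta>\<^sup>2 - \<i> / 2 * (complex_of_real ((cmod (\<psi> x t))\<^sup>2) - 1)) * b2 x t)) (at t)"
    using B unfolding lax_pair_solution_def by blast+
  define r where "r = (\<lambda>x t. a2 x t * b1 x t + a1 x t * b2 x t)"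
  define Px where "Px = (\<lambda>x t. - 2 * \<i> * \<zeta> * (a1 x t * b1 x t) + \<psi> x t * r x t)"
  define Qx where "Qx = (\<lambda>x t. 2 * \<i> * \<zeta> * (a2 x t * b2 x t) - cnj (\<psi> x t) * r x t)"
  define Rx where "Rx = (\<lambda>x t. - 2 * cnj (\<psi> x t) * (a1 x t * b1 x t) + 2 * \<psi> x t * (a2 x t * b2 x t))"
  define Pxx where "Pxx = (\<lambda>x t. - 2 * \<i> * \<zeta> * Px x t + \<psi>x x t * r x t + \<psi> x t * Rx x t)"
  define Qxx where "Qxx = (\<lambda>x t. 2 * \<i> * \<zeta> * Qx x t - cnj (\<psi>x x t) * r x t - cnj (\<psi> x t) * Rx x t)"
  define T11 where "T11 = (\<lambda>x t. (- \<i> * \<zeta>\<^sup>2 + \<i> / 2 * (complex_of_real ((cmod (\<psi> x t))\<^sup>2) - 1)))"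
  define T12 where "T12 = (\<lambda>x t. (\<zeta> * \<psi> x t + \<i> / 2 * \<psi>x x t))"
  define T21 where "T21 = (\<lambda>x t. (- \<zeta> * cnj (\<psi> x t) + \<i> / 2 * cnj (\<psi>x x t)))"
  define T22 where "T22 = (\<lambda>x t. (\<i> * \<zeta>\<^sup>2 - \<i> / 2 * (complex_of_real ((cmod (\<psi> x t))\<^sup>2) - 1)))"
  define Pt where "Pt = (\<lambda>x t. (T11 x t * a1 x t + T12 x t * a2 x t) * b1 x t + a1 x t * (T11 x t * b1 x t + T12 x t * b2 x t))"
  define Qt where "Qt = (\<lambda>x t. (T21 x t * a1 x t + T22 x t * a2 x t) * b2 x t + a2 x t * (T21 x t * b1 x t + T22 x t * b2 x t))"
  show ?thesis unfolding solves_linearized_NLS_def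
  proof (intro exI conjI allI)
    fix x t
    show "((\<lambda>y. C * a1 y t * b1 y t - cnj C * cnj (a2 y t * b2 y t)) has_vector_derivative
       (C * Px x t - cnj C * cnj (Qx x t))) (at x)"
      apply (rule has_vector_derivative_eq_rhs)
       apply ((rule a1x a2x b1x b2x px derivative_intros)+)
      apply (simp add: Px_def Qx_def r_def)
      apply (simp add: algebra_simps)
      done
  next
    fix x t
    show "((\<lambda>y. C * Px y t - cnj C * cnj (Qx y t)) has_vector_derivative
       (C * Pxx x t - cnj C * cnj (Qxx x t))) (at x)"
      unfolding Px_def Qx_def r_def
      apply (rule has_vector_derivative_eq_rhs)
       apply ((rule a1x a2x b1x b2x px derivative_intros)+)
      apply (simp add: Pxx_def Qxx_def Px_def Qx_def Rx_def r_def)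
      apply (simp add: algebra_simps)
      done
  next
    fix x t
    show "((\<lambda>s. C * a1 x s * b1 x s - cnj C * cnj (a2 x s * b2 x s)) has_vector_derivative
       (C * Pt x t - cnj C * cnj (Qt x t))) (at t)"
      apply (rule has_vector_derivative_eq_rhs)
       apply ((rule a1t a2t b1t b2t derivative_intros)+)
      apply (simp add: Pt_def Qt_def T11_def T12_def T21_def T22_def)
      apply (simp add: algebra_simps)
      done
  next
    fix x t
    have m: "complex_of_real ((cmod (\<psi> x t))\<^sup>2) = \<psi> x t * cnj (\<psi> x t)"
      by (rule complex_norm_square)
    show "\<i> * (C * Pt x t - cnj C * cnj (Qt x t)) + (C * Pxx x t - cnj C * cnj (Qxx x t)) / 2 +
         (2 * complex_of_real ((cmod (\<psi> x t))\<^sup>2) - 1) * (C * a1 x t * b1 x t - cnj C * cnj (a2 x t * b2 x t)) +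
         (\<psi> x t)\<^sup>2 * cnj (C * a1 x t * b1 x t - cnj C * cnj (a2 x t * b2 x t)) = 0"
      unfolding Pt_def Qt_def T11_def T12_def T21_def T22_def Pxx_def Qxx_def Px_def Qx_def Rx_def r_def m
      apply (simp add: power2_eq_square)
      apply (simp add: field_simps)
      done
  qed
qed

theorem mainTheorem13:
  fixes \<psi>0 \<psi>0x \<psi>0xx \<psi>0t :: "real \<Rightarrow> real \<Rightarrow> complex"
    and \<zeta> :: complex
    and ua1 ua2 ub1 ub2 :: "real \<Rightarrow> real \<Rightarrow> complex"
  assumes "classical_NLS_solution \<psi>0 \<psi>0x \<psi>0xx \<psi>0t"
    and "lax_pair_solution \<psi>0 \<psi>0x \<zeta> ua1 ua2"
    and "lax_pair_solution \<psi>0 \<psi>0x \<zeta> ub1 ub2"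
  shows "(\<forall>C::complex. solves_linearized_NLS \<psi>0
            (\<lambda>x t. C * ua1 x t * ub1 x t - cnj C * cnj (ua2 x t * ub2 x t)))
      \<and> solves_linearized_NLS \<psi>0 (\<lambda>x t. ua1 x t * ub1 x t - cnj (ua2 x t * ub2 x t))
      \<and> solves_linearized_NLS \<psi>0
            (\<lambda>x t. \<i> * ua1 x t * ub1 x t + \<i> * cnj (ua2 x t * ub2 x t))"
proof -
  have G: "\<And>C. solves_linearized_NLS \<psi>0
            (\<lambda>x t. C * ua1 x t * ub1 x t - cnj C * cnj (ua2 x t * ub2 x t))"
    by (rule gen[OF assms])
  show ?thesis
    using G[of 1] G[of \<i>] G by simp
qed

end
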